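(* Let $P\in\mathbb{P}^2$ be a point at which the conic $C_2$ is singular. Then: \begin{enumerate} \item If $P\in (C_2\cap L)\setminus L_\infty$, then $(D,P)$ is of type $e_6$. \item If $P\in (C_2\cap L_\infty)\setminus L$, then $D$ is smooth at $P$ and tangent to $L_\infty$ at $P$ with $I(D,L_\infty;P)=4$. \item If $P\in C_2\cap L\cap L_\infty$, then $D$ consists of four lines passing through $P$. \end{enumerate}
   Context: Work in $\mathbb{P}^2$ with homogeneous coordinates $[X:Y:Z]$, $L_\infty=\{Z=0\}$. Let $F_1'$ and $F_2'$ be homogeneous polynomials of degrees $1$ and $2$, let $L=\{F_1'=0\}$ be a line with $L\neq L_\infty$, and $C_2=\{F_2'=0\}$ a conic having neither $L$ nor $L_\infty$ as a component. Let $D=\{G=0\}$ be the quartic with $G=F_2'^2+F_1'^3Z$. "$(D,P)$ is of type $e_6$" means the germ of $D$ at $P$ is topologically equivalent to the germ $x^3+y^4=0$ at the origin; $I(\cdot,\cdot;P)$ is the local intersection multiplicity. *)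

theory Defs
  imports "HOL-Complex_Analysis.Complex_Analysis"
begin

text \<open>Homogeneous polynomials in X,Y,Z over the complex numbers are represented by the
polynomial functions they induce (over an infinite field this is a faithful
representation). Points of P^2 are represented by nonzero triples (p1,p2,p3);
all conditions below are invariant under rescaling.\<close>

type_synonym form3 = "complex \<Rightarrow> complex \<Rightarrow> complex \<Rightarrow> complex"

definition linear_form :: "form3 \<Rightarrow> bool" where
  "linear_form F \<longleftrightarrow> (\<exists>a b c. (a, b, c) \<noteq> (0, 0, 0) \<and>
      (\<forall>X Y Z. F X Y Z = a * X + b * Y + c * Z))"

definition quadratic_form :: "form3 \<Rightarrow> bool" where
  "quadratic_form F \<longleftrightarrow> F \<noteq> (\<lambda>_ _ _. 0) \<and>
     (\<exists>a b c d e f. \<forall>X Y Z. F X Y Z =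
        a * X^2 + b * Y^2 + c * Z^2 + d * X * Y + e * X * Z + f * Y * Z)"

text \<open>The line \<open>{F1 = 0}\<close> is a component of the curve \<open>{F = 0}\<close>: F1 divides F, the
cofactor being a linear form (F of degree 2).\<close>
definition line_component :: "form3 \<Rightarrow> form3 \<Rightarrow> bool" where
  "line_component F1 F \<longleftrightarrow> (\<exists>H. linear_form H \<and> (\<forall>X Y Z. F X Y Z = F1 X Y Z * H X Y Z))"

definition zero_grad :: "form3 \<Rightarrow> complex \<Rightarrow> complex \<Rightarrow> complex \<Rightarrow> bool" where
  "zero_grad F p1 p2 p3 \<longleftrightarrow>
     deriv (\<lambda>x. F x p2 p3) p1 = 0 \<and> deriv (\<lambda>y. F p1 y p3) p2 = 0 \<and> deriv (\<lambda>z. F p1 p2 z) p3 = 0"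

definition singular_at :: "form3 \<Rightarrow> complex \<Rightarrow> complex \<Rightarrow> complex \<Rightarrow> bool" where
  "singular_at F p1 p2 p3 \<longleftrightarrow> F p1 p2 p3 = 0 \<and> zero_grad F p1 p2 p3"

definition smooth_at :: "form3 \<Rightarrow> complex \<Rightarrow> complex \<Rightarrow> complex \<Rightarrow> bool" where
  "smooth_at F p1 p2 p3 \<longleftrightarrow> F p1 p2 p3 = 0 \<and> \<not> zero_grad F p1 p2 p3"

text \<open>The tangent line of \<open>{F=0}\<close> at a smooth point P is \<open>L_\<infinity> = {Z = 0}\<close>.\<close>
definition tangent_to_Linf :: "form3 \<Rightarrow> complex \<Rightarrow> complex \<Rightarrow> complex \<Rightarrow> bool" where
  "tangent_to_Linf F p1 p2 p3 \<longleftrightarrow>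
     deriv (\<lambda>x. F x p2 p3) p1 = 0 \<and> deriv (\<lambda>y. F p1 y p3) p2 = 0 \<and> deriv (\<lambda>z. F p1 p2 z) p3 \<noteq> 0"

text \<open>Local intersection multiplicity at P of the curve \<open>{F=0}\<close> with the line through
the distinct points P and Q (line not a component): the order of vanishing at t = 0
of \<open>t \<mapsto> F(P + t Q)\<close>.\<close>
definition line_int_mult ::
  "form3 \<Rightarrow> complex \<times> complex \<times> complex \<Rightarrow> complex \<times> complex \<times> complex \<Rightarrow> int" where
  "line_int_mult F P Q = (case P of (p1, p2, p3) \<Rightarrow> case Q of (q1, q2, q3) \<Rightarrow>
      zorder (\<lambda>t. F (p1 + t * q1) (p2 + t * q2) (p3 + t * q3)) 0)"

text \<open>Germ of the zero set of g at p is topologically equivalent to the germ of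
\<open>x^3 + y^4 = 0\<close> at the origin (in C^2).\<close>
definition e6_germ :: "(complex \<times> complex \<Rightarrow> complex) \<Rightarrow> complex \<times> complex \<Rightarrow> bool" where
  "e6_germ g p \<longleftrightarrow> (\<exists>U (V :: (complex \<times> complex) set) h k. open U \<and> open V \<and> p \<in> U \<and> (0, 0) \<in> V \<and>
      homeomorphism U V h k \<and> h p = (0, 0) \<and>
      h ` (U \<inter> {z. g z = 0}) = V \<inter> {(x, y). x ^ 3 + y ^ 4 = 0})"

text \<open>(D,P) of type e6 for \<open>P \<notin> L_\<infinity>\<close>, read in the affine chart Z = 1.\<close>
definition proj_e6 :: "form3 \<Rightarrow> complex \<Rightarrow> complex \<Rightarrow> complex \<Rightarrow> bool" where
  "proj_e6 G p1 p2 p3 \<longleftrightarrow> e6_germ (\<lambda>(x, y). G x y 1) (p1 / p3, p2 / p3)"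

end

theory Submission
  imports Defs "HOL-Computational_Algebra.Fundamental_Theorem_Algebra"
begin


definition hd2 :: "(complex \<times> complex \<Rightarrow> complex) \<Rightarrow> complex \<Rightarrow> complex \<Rightarrow> complex \<times> complex \<Rightarrow> bool" where
  "hd2 F A B z \<longleftrightarrow> (F has_derivative (\<lambda>v. A * fst v + B * snd v)) (at z)"

lemma hd2_cong: "hd2 F A B z \<Longrightarrow> A = A' \<Longrightarrow> B = B' \<Longrightarrow> hd2 F A' B' z" by simp

lemma hd2_fst: "hd2 fst 1 0 z"
  unfolding hd2_def by (rule has_derivative_eq_rhs[OF has_derivative_fst[OF has_derivative_ident]]) auto

lemma hd2_snd: "hd2 snd 0 1 z"
  unfolding hd2_def by (rule has_derivative_eq_rhs[OF has_derivative_snd[OF has_derivative_ident]]) auto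

lemma hd2_const: "hd2 (\<lambda>_. c) 0 0 z"
  unfolding hd2_def by (rule has_derivative_eq_rhs[OF has_derivative_const]) auto

lemma hd2_add: "hd2 F A B z \<Longrightarrow> hd2 G C D z \<Longrightarrow> hd2 (\<lambda>z. F z + G z) (A + C) (B + D) z"
  unfolding hd2_def by (erule (1) has_derivative_eq_rhs[OF has_derivative_add]) (auto simp: algebra_simps)

lemma hd2_diff: "hd2 F A B z \<Longrightarrow> hd2 G C D z \<Longrightarrow> hd2 (\<lambda>z. F z - G z) (A - C) (B - D) z"
  unfolding hd2_def by (erule (1) has_derivative_eq_rhs[OF has_derivative_diff]) (auto simp: algebra_simps)

lemma hd2_mult: "hd2 F A B z \<Longrightarrow> hd2 G C D z \<Longrightarrow> hd2 (\<lambda>z. F z * G z) (F z * C + A * G z) (F z * D + B * G z) z"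
  unfolding hd2_def by (erule (1) has_derivative_eq_rhs[OF has_derivative_mult]) (auto simp: algebra_simps)

lemma hd2_comp: "(f has_field_derivative f') (at (F z)) \<Longrightarrow> hd2 F A B z \<Longrightarrow> hd2 (\<lambda>z. f (F z)) (f' * A) (f' * B) z"
  unfolding hd2_def has_field_derivative_def
  apply (rule has_derivative_eq_rhs)
   apply (rule has_derivative_compose[where f=F and g=f])
    apply assumption
   apply assumption
  by (auto simp: algebra_simps)

lemma mat_bound:
  fixes a b c e :: complex and v :: "complex \<times> complex"
  shows "norm (a * fst v + b * snd v, c * fst v + e * snd v)
     \<le> (norm a + norm b + norm c + norm e) * norm v"
proof -
  obtain h k where v: "v = (h, k)" by (cases v)
  have h: "norm h \<le> norm v" and k: "norm k \<le> norm v" using norm_fst_le norm_snd_le v by auto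
  have "norm (a * h + b * k, c * h + e * k) \<le> norm (a * h + b * k) + norm (c * h + e * k)"
    by (rule norm_Pair_le)
  also have "\<dots> \<le> (norm a * norm h + norm b * norm k) + (norm c * norm h + norm e * norm k)"
    by (intro add_mono order_trans[OF norm_triangle_ineq]) (auto simp: norm_mult)
  also have "\<dots> \<le> (norm a * norm v + norm b * norm v) + (norm c * norm v + norm e * norm v)"
    by (intro add_mono mult_left_mono h k) auto
  finally show ?thesis using v by (simp add: algebra_simps)
qed

lemma loc_inj:
  fixes \<Psi> :: "complex \<times> complex \<Rightarrow> complex \<times> complex"
  assumes S: "open S" "0 \<in> S"
    and der: "\<And>z. z \<in> S \<Longrightarrow> (\<Psi> has_derivative (\<lambda>v. (a z * fst v + b z * snd v, c z * fst v + e z * snd v))) (at z)"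
    and ca: "isCont a 0" and cb: "isCont b 0" and cc: "isCont c 0" and ce: "isCont e 0"
    and v0: "a 0 = 1" "b 0 = 0" "c 0 = 0" "e 0 = 1"
  obtains r where "r > 0" "ball 0 r \<subseteq> S" "inj_on \<Psi> (ball 0 r)"
proof (rule has_derivative_locally_injective[OF S(2,1), where g' = id and f' = "\<lambda>z v. (a z * fst v + b z * snd v, c z * fst v + e z * snd v)"])
  show "bounded_linear id" by (simp add: id_def bounded_linear_ident)
  show "id \<circ> (\<lambda>v. (a 0 * fst v + b 0 * snd v, c 0 * fst v + e 0 * snd v)) = id"
    using v0 by (auto simp: fun_eq_iff)
  show "\<And>x. x \<in> S \<Longrightarrow> (\<Psi> has_derivative (\<lambda>v. (a x * fst v + b x * snd v, c x * fst v + e x * snd v))) (at x)"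
    by (rule der)
  fix \<epsilon> :: real assume "\<epsilon> > 0"
  then have e5: "\<epsilon>/5 > 0" by simp
  obtain d1 where d1: "d1 > 0" "\<And>x. dist x 0 < d1 \<Longrightarrow> dist (a x) (a 0) < \<epsilon>/5"
    using ca e5 unfolding continuous_at_eps_delta by blast
  obtain d2 where d2: "d2 > 0" "\<And>x. dist x 0 < d2 \<Longrightarrow> dist (b x) (b 0) < \<epsilon>/5"
    using cb e5 unfolding continuous_at_eps_delta by blast
  obtain d3 where d3: "d3 > 0" "\<And>x. dist x 0 < d3 \<Longrightarrow> dist (c x) (c 0) < \<epsilon>/5"
    using cc e5 unfolding continuous_at_eps_delta by blast
  obtain d4 where d4: "d4 > 0" "\<And>x. dist x 0 < d4 \<Longrightarrow> dist (e x) (e 0) < \<epsilon>/5"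
    using ce e5 unfolding continuous_at_eps_delta by blast
  show "\<exists>d>0. \<forall>x. dist 0 x < d \<longrightarrow> onorm (\<lambda>v. (a x * fst v + b x * snd v, c x * fst v + e x * snd v) -
            (a 0 * fst v + b 0 * snd v, c 0 * fst v + e 0 * snd v)) < \<epsilon>"
  proof (intro exI[of _ "min (min d1 d2) (min d3 d4)"] conjI allI impI)
    show "min (min d1 d2) (min d3 d4) > 0" using d1 d2 d3 d4 by simp
    fix x :: "complex \<times> complex" assume "dist 0 x < min (min d1 d2) (min d3 d4)"
    then have x: "dist x 0 < d1" "dist x 0 < d2" "dist x 0 < d3" "dist x 0 < d4" by (auto simp: dist_commute)
    have "onorm (\<lambda>v. (a x * fst v + b x * snd v, c x * fst v + e x * snd v) -
            (a 0 * fst v + b 0 * snd v, c 0 * fst v + e 0 * snd v))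
       \<le> norm (a x - a 0) + norm (b x - b 0) + norm (c x - c 0) + norm (e x - e 0)"
    proof (rule onorm_le)
      fix v :: "complex \<times> complex"
      have "(a x * fst v + b x * snd v, c x * fst v + e x * snd v) -
            (a 0 * fst v + b 0 * snd v, c 0 * fst v + e 0 * snd v) =
            ((a x - a 0) * fst v + (b x - b 0) * snd v, (c x - c 0) * fst v + (e x - e 0) * snd v)"
        by (simp add: algebra_simps)
      then show "norm ((a x * fst v + b x * snd v, c x * fst v + e x * snd v) -
            (a 0 * fst v + b 0 * snd v, c 0 * fst v + e 0 * snd v))
         \<le> (norm (a x - a 0) + norm (b x - b 0) + norm (c x - c 0) + norm (e x - e 0)) * norm v"
        using mat_bound by metis
    qed
    also have "\<dots> < \<epsilon>"
      using d1(2)[OF x(1)] d2(2)[OF x(2)] d3(2)[OF x(3)] d4(2)[OF x(4)] \<open>\<epsilon> > 0\<close>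
      by (simp add: dist_norm)
    finally show "onorm (\<lambda>v. (a x * fst v + b x * snd v, c x * fst v + e x * snd v) -
            (a 0 * fst v + b 0 * snd v, c 0 * fst v + e 0 * snd v)) < \<epsilon>" .
  qed
next
  fix r assume "0 < r" "ball 0 r \<subseteq> S" "inj_on \<Psi> (ball 0 r)"
  then show thesis using that by blast
qed




definition cr :: "complex \<Rightarrow> complex" where "cr z = exp (Ln z / 3)"
definition qr :: "complex \<Rightarrow> complex" where "qr z = exp (Ln z / 4)"

lemma cr_cube: "z \<noteq> 0 \<Longrightarrow> cr z ^ 3 = z"
  unfolding cr_def by (simp add: exp_of_nat_mult[symmetric])
lemma qr_pow4: "z \<noteq> 0 \<Longrightarrow> qr z ^ 4 = z"
  unfolding qr_def by (simp add: exp_of_nat_mult[symmetric])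
lemma cr_nz: "cr z \<noteq> 0" unfolding cr_def by simp
lemma qr_nz: "qr z \<noteq> 0" unfolding qr_def by simp
lemma cr_one: "cr 1 = 1" unfolding cr_def by simp
lemma qr_one: "qr 1 = 1" unfolding qr_def by simp

lemma cr_deriv: assumes z: "z \<notin> \<real>\<^sub>\<le>\<^sub>0" shows "(cr has_field_derivative (cr z / (3 * z))) (at z)"
proof -
  have "((\<lambda>z. Ln z / 3) has_field_derivative inverse z / 3) (at z)"
    using DERIV_cdivide[OF has_field_derivative_Ln[OF z]] .
  from DERIV_fun_exp[OF this] show ?thesis by (simp add: field_simps cr_def[abs_def] qr_def[abs_def])
qed

lemma qr_deriv: assumes z: "z \<notin> \<real>\<^sub>\<le>\<^sub>0" shows "(qr has_field_derivative (qr z / (4 * z))) (at z)"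
proof -
  have "((\<lambda>z. Ln z / 4) has_field_derivative inverse z / 4) (at z)"
    using DERIV_cdivide[OF has_field_derivative_Ln[OF z]] .
  from DERIV_fun_exp[OF this] show ?thesis by (simp add: field_simps cr_def[abs_def] qr_def[abs_def])
qed

definition Wf :: "complex \<Rightarrow> complex \<times> complex \<Rightarrow> complex" where "Wf d z = 1 + d^2 * fst z"
definition Cf :: "complex \<Rightarrow> complex \<times> complex \<Rightarrow> complex" where "Cf d z = cr (Wf d z)"
definition Cu :: "complex \<Rightarrow> complex \<times> complex \<Rightarrow> complex" where "Cu d z = Cf d z / (3 * Wf d z) * d^2"
definition sF :: "complex \<Rightarrow> complex \<times> complex \<Rightarrow> complex" where "sF d z = fst z * Cf d z"
definition su :: "complex \<Rightarrow> complex \<times> complex \<Rightarrow> complex" where "su d z = Cf d z + fst z * Cu d z"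
definition eF :: "complex \<Rightarrow> complex \<times> complex \<Rightarrow> complex" where "eF d z = (2 * d / 3) / (Cf d z)^2"
definition eu :: "complex \<Rightarrow> complex \<times> complex \<Rightarrow> complex" where "eu d z = (- 2 * (2 * d / 3) / (Cf d z)^3) * Cu d z"
definition XF :: "complex \<Rightarrow> complex \<times> complex \<Rightarrow> complex" where "XF d z = sF d z + eF d z * (snd z * snd z)"
definition Xu :: "complex \<Rightarrow> complex \<times> complex \<Rightarrow> complex" where "Xu d z = su d z + eu d z * (snd z * snd z)"
definition XY :: "complex \<Rightarrow> complex \<times> complex \<Rightarrow> complex" where "XY d z = eF d z * (2 * snd z)"
definition MF :: "complex \<Rightarrow> complex \<times> complex \<Rightarrow> complex" where "MF d z = 1 - 3 * (sF d z * (eF d z * eF d z)) - eF d z * (eF d z * eF d z) * (snd z * snd z)"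
definition Mu :: "complex \<Rightarrow> complex \<times> complex \<Rightarrow> complex" where "Mu d z = - 3 * (sF d z * (2 * eF d z * eu d z) + su d z * (eF d z * eF d z))
     - (eF d z * (eF d z * eF d z) * 0 + (eF d z * (2 * eF d z * eu d z) + eu d z * (eF d z * eF d z)) * (snd z * snd z))"
definition MY :: "complex \<Rightarrow> complex \<times> complex \<Rightarrow> complex" where "MY d z = - (eF d z * (eF d z * eF d z) * (2 * snd z))"
definition YF :: "complex \<Rightarrow> complex \<times> complex \<Rightarrow> complex" where "YF d z = snd z * qr (MF d z)"
definition Yu :: "complex \<Rightarrow> complex \<times> complex \<Rightarrow> complex" where "Yu d z = snd z * (qr (MF d z) / (4 * MF d z) * Mu d z)"
definition YY :: "complex \<Rightarrow> complex \<times> complex \<Rightarrow> complex" where "YY d z = snd z * (qr (MF d z) / (4 * MF d z) * MY d z) + qr (MF d z)"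

lemma hd2_sq: "hd2 F A B z \<Longrightarrow> hd2 (\<lambda>z. F z * F z) (2 * F z * A) (2 * F z * B) z"
  by (rule hd2_cong[OF hd2_mult]) (auto simp: algebra_simps)

lemma hW: "hd2 (Wf d) (d^2) 0 z"
  unfolding Wf_def[abs_def] by (rule hd2_cong[OF hd2_add[OF hd2_const hd2_mult[OF hd2_const hd2_fst]]]) simp_all

lemma hC: "Wf d z \<notin> \<real>\<^sub>\<le>\<^sub>0 \<Longrightarrow> hd2 (Cf d) (Cu d z) 0 z"
  unfolding Cf_def[abs_def] by (rule hd2_cong[OF hd2_comp[OF cr_deriv hW]]) (auto simp: Cu_def Cf_def)

lemma hs: "Wf d z \<notin> \<real>\<^sub>\<le>\<^sub>0 \<Longrightarrow> hd2 (sF d) (su d z) 0 z"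
  unfolding sF_def[abs_def] by (rule hd2_cong[OF hd2_mult[OF hd2_fst hC]]) (auto simp: su_def)

lemma inv_sq_deriv: "t \<noteq> 0 \<Longrightarrow> ((\<lambda>t. k / t^2) has_field_derivative (- 2 * k / t^3)) (at t)"
  by (rule derivative_eq_intros | simp)+ (auto simp: field_simps power2_eq_square power3_eq_cube power4_eq_xxxx)

lemma he: "Wf d z \<notin> \<real>\<^sub>\<le>\<^sub>0 \<Longrightarrow> hd2 (eF d) (eu d z) 0 z"
  unfolding eF_def[abs_def]
  by (rule hd2_cong[OF hd2_comp[OF inv_sq_deriv[where k = "2 * d / 3"] hC]]) (auto simp: eu_def cr_nz Cf_def)

lemma hX: "Wf d z \<notin> \<real>\<^sub>\<le>\<^sub>0 \<Longrightarrow> hd2 (XF d) (Xu d z) (XY d z) z"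
  unfolding XF_def[abs_def]
  by (rule hd2_cong[OF hd2_add[OF hs hd2_mult[OF he hd2_sq[OF hd2_snd]]]]) (auto simp: Xu_def XY_def algebra_simps)

lemma hM: "Wf d z \<notin> \<real>\<^sub>\<le>\<^sub>0 \<Longrightarrow> hd2 (MF d) (Mu d z) (MY d z) z"
  unfolding MF_def[abs_def]
  by (rule hd2_cong[OF hd2_diff[OF hd2_diff[OF hd2_const hd2_mult[OF hd2_const hd2_mult[OF hs hd2_sq[OF he]]]] hd2_mult[OF hd2_mult[OF he hd2_sq[OF he]] hd2_sq[OF hd2_snd]]]])
     (auto simp: Mu_def MY_def algebra_simps)

lemma hY: "Wf d z \<notin> \<real>\<^sub>\<le>\<^sub>0 \<Longrightarrow> MF d z \<notin> \<real>\<^sub>\<le>\<^sub>0 \<Longrightarrow> hd2 (YF d) (Yu d z) (YY d z) z"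
  unfolding YF_def[abs_def]
  by (rule hd2_cong[OF hd2_mult[OF hd2_snd hd2_comp[OF qr_deriv hM]]]) (auto simp: Yu_def YY_def algebra_simps)

lemma W0: "Wf d 0 = 1" by (simp add: Wf_def)
lemma C0: "Cf d 0 = 1" by (simp add: Cf_def W0 cr_one)
lemma M0: "MF d 0 = 1" by (simp add: MF_def sF_def)

lemma cont_C: "isCont (Cf d) 0"
  unfolding Cf_def[abs_def] cr_def Wf_def by (intro continuous_intros) auto

lemma cont_entries:
  shows "isCont (Xu d) 0" "isCont (XY d) 0" "isCont (Yu d) 0" "isCont (YY d) 0"
proof -
  have C: "isCont (Cf d) 0" by (rule cont_C)
  have W: "isCont (Wf d) 0" unfolding Wf_def[abs_def] by (intro continuous_intros)
  have Cu: "isCont (Cu d) 0" unfolding Cu_def[abs_def] using C W W0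
    by (intro continuous_intros) auto
  have s: "isCont (sF d) 0" unfolding sF_def[abs_def] using C by (intro continuous_intros)
  have su: "isCont (su d) 0" unfolding su_def[abs_def] using C Cu by (intro continuous_intros)
  have e: "isCont (eF d) 0" unfolding eF_def[abs_def] using C C0 by (intro continuous_intros) auto
  have eu: "isCont (eu d) 0" unfolding eu_def[abs_def] using C C0 Cu by (intro continuous_intros) auto
  show "isCont (Xu d) 0" unfolding Xu_def[abs_def] using su eu by (intro continuous_intros)
  show "isCont (XY d) 0" unfolding XY_def[abs_def] using e by (intro continuous_intros)
  have M: "isCont (MF d) 0" unfolding MF_def[abs_def] using s e by (intro continuous_intros)
  have Mu: "isCont (Mu d) 0" unfolding Mu_def[abs_def] using s e su eu by (intro continuous_intros)
  have MY: "isCont (MY d) 0" unfolding MY_def[abs_def] using e by (intro continuous_intros)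
  have q: "isCont (\<lambda>z. qr (MF d z)) 0" unfolding qr_def using M M0 by (intro continuous_intros) auto
  show "isCont (Yu d) 0" unfolding Yu_def[abs_def] using q M M0 Mu by (intro continuous_intros) auto
  show "isCont (YY d) 0" unfolding YY_def[abs_def] using q M M0 MY by (intro continuous_intros) auto
qed

lemma entries0: "Xu d 0 = 1" "XY d 0 = 0" "Yu d 0 = 0" "YY d 0 = 1"
  by (simp_all add: Xu_def XY_def Yu_def YY_def su_def C0 M0 qr_one)

lemma psi0: "XF d 0 = 0" "YF d 0 = 0"
  by (simp_all add: XF_def YF_def sF_def)

lemma psi_ident:
  assumes "Wf d z \<noteq> 0" "MF d z \<noteq> 0"
  shows "XF d z ^ 3 + YF d z ^ 4 = fst z ^ 3 + (snd z ^ 2 + d * fst z ^ 2)^2"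
proof -
  define c where "c = Cf d z"
  have c3: "c ^ 3 = 1 + d^2 * fst z" using assms(1) by (simp add: c_def Cf_def cr_cube Wf_def)
  have cnz: "c \<noteq> 0" by (simp add: c_def Cf_def cr_nz)
  have q4: "qr (MF d z) ^ 4 = MF d z" using assms(2) by (rule qr_pow4)
  have "XF d z ^ 3 + YF d z ^ 4 = XF d z ^ 3 + snd z ^ 4 * MF d z"
    by (simp add: YF_def power_mult_distrib q4)
  also have "\<dots> = fst z ^ 3 * c^3 + 2 * d * fst z ^ 2 * snd z ^ 2 + snd z ^ 4"
    unfolding XF_def MF_def sF_def eF_def c_def[symmetric] using cnz
    by (simp add: field_simps power2_eq_square power3_eq_cube) algebra
  also have "\<dots> = fst z ^ 3 + (snd z ^ 2 + d * fst z ^ 2)^2"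
    unfolding c3 by algebra
  finally show ?thesis .
qed

lemma Re_pos_nonpos: "Re w > 0 \<Longrightarrow> w \<notin> \<real>\<^sub>\<le>\<^sub>0"
  by (auto simp: complex_nonpos_Reals_iff)

lemma e6_core:
  fixes T :: "complex \<times> complex \<Rightarrow> complex \<times> complex" and g :: "complex \<times> complex \<Rightarrow> complex"
  assumes cT: "continuous_on UNIV T" and iT: "inj T" and Tp: "T p = 0"
    and gid: "\<And>z. g z = fst (T z)^3 + (snd (T z)^2 + d * fst (T z)^2)^2"
  shows "e6_germ g p"
proof -
  define S1 where "S1 = {z. 0 < Re (Wf d z)}"
  have oS1: "open S1" unfolding S1_def Wf_def
    by (intro open_Collect_less continuous_intros)
  have cM: "continuous_on S1 (MF d)"
  proof (rule continuous_at_imp_continuous_on, rule ballI)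
    fix z assume "z \<in> S1"
    then have "Wf d z \<notin> \<real>\<^sub>\<le>\<^sub>0" by (simp add: S1_def Re_pos_nonpos)
    from hM[OF this] show "isCont (MF d) z" unfolding hd2_def by (rule has_derivative_continuous)
  qed
  define S where "S = S1 \<inter> MF d -` {w. Re w > 0}"
  have oS: "open S" unfolding S_def
    by (rule continuous_open_preimage[OF cM oS1]) (simp add: open_halfspace_Re_gt)
  have S0: "0 \<in> S" by (simp add: S_def S1_def W0 M0)
  define \<Psi> where "\<Psi> = (\<lambda>z. (XF d z, YF d z))"
  have der: "(\<Psi> has_derivative (\<lambda>v. (Xu d z * fst v + XY d z * snd v, Yu d z * fst v + YY d z * snd v))) (at z)"
    if "z \<in> S" for z
  proof -
    have 1: "Wf d z \<notin> \<real>\<^sub>\<le>\<^sub>0" "MF d z \<notin> \<real>\<^sub>\<le>\<^sub>0" using that by (simp_all add: S_def S1_def Re_pos_nonpos)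
    show ?thesis unfolding \<Psi>_def
      using has_derivative_Pair[OF hX[OF 1(1), unfolded hd2_def] hY[OF 1, unfolded hd2_def]] .
  qed
  obtain r where r: "r > 0" "ball 0 r \<subseteq> S" "inj_on \<Psi> (ball 0 r)"
    using loc_inj[OF oS S0 der cont_entries entries0] by blast
  have cPsi: "continuous_on (ball 0 r) \<Psi>"
    using r(2) der by (intro continuous_at_imp_continuous_on ballI has_derivative_continuous) blast
  define U where "U = T -` ball 0 r"
  have oU: "open U" unfolding U_def using cT by (intro open_vimage) auto
  have pU: "p \<in> U" using Tp r(1) by (simp add: U_def)
  define h where "h = \<Psi> \<circ> T"
  have TU: "T ` U \<subseteq> ball 0 r" by (auto simp: U_def)
  have ch: "continuous_on U h" unfolding h_def
    by (rule continuous_on_compose[OF continuous_on_subset[OF cT] continuous_on_subset[OF cPsi TU]]) auto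
  have ih: "inj_on h U" unfolding h_def
    by (rule comp_inj_on[OF inj_on_subset[OF iT] inj_on_subset[OF r(3) TU]]) auto
  have oV: "open (h ` U)" by (rule invariance_of_domain[OF ch oU ih])
  obtain k where hom: "homeomorphism U (h ` U) h k"
    using invariance_of_domain_homeomorphism[OF oU ch _ ih] by auto
  have hp: "h p = (0, 0)" by (simp add: h_def \<Psi>_def Tp psi0)
  have geq: "g z = fst (h z) ^ 3 + snd (h z) ^ 4" if "z \<in> U" for z
  proof -
    have "T z \<in> S" using that r(2) by (auto simp: U_def)
    then have "Wf d (T z) \<noteq> 0" "MF d (T z) \<noteq> 0" by (auto simp: S_def S1_def)
    from psi_ident[OF this] show ?thesis by (simp add: gid h_def \<Psi>_def)
  qed
  have img: "h ` (U \<inter> {z. g z = 0}) = h ` U \<inter> {(x, y). x ^ 3 + y ^ 4 = 0}"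
  proof (intro set_eqI iffI)
    fix w assume "w \<in> h ` (U \<inter> {z. g z = 0})"
    then obtain z where z: "z \<in> U" "g z = 0" "w = h z" by auto
    then show "w \<in> h ` U \<inter> {(x, y). x ^ 3 + y ^ 4 = 0}" using geq[OF z(1)] by (auto simp: case_prod_beta)
  next
    fix w assume "w \<in> h ` U \<inter> {(x, y). x ^ 3 + y ^ 4 = 0}"
    then obtain z where z: "z \<in> U" "w = h z" "fst w ^ 3 + snd w ^ 4 = 0" by (auto simp: case_prod_beta)
    then show "w \<in> h ` (U \<inter> {z. g z = 0})" using geq[OF z(1)] by auto
  qed
  show ?thesis unfolding e6_germ_def
    using oU oV pU hp hom img by (intro exI[of _ U] exI[of _ "h ` U"] exI[of _ h] exI[of _ k]) (auto simp: hp[symmetric])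
qed




lemma root_exists:
  fixes p :: "complex poly"
  assumes "degree p \<ge> 1"
  shows "\<exists>z. poly p z = 0"
  using fundamental_theorem_of_algebra[of p] assms constant_degree[of p] by auto

lemma quad_factor: "\<exists>r1 r2. \<forall>z::complex. z^2 + a1 * z + a0 = (z - r1) * (z - r2)"
proof -
  obtain r where r: "poly [:a0, a1, 1:] r = 0" using root_exists[of "[:a0, a1, 1:]"] by auto
  show ?thesis
    apply (rule exI[of _ r], rule exI[of _ "- a1 - r"])
    using r by (auto simp: algebra_simps power2_eq_square)
qed

lemma cubic_factor: "\<exists>r1 r2 r3. \<forall>z::complex. z^3 + a2 * z^2 + a1 * z + a0 = (z - r1) * (z - r2) * (z - r3)"
proof -
  obtain r where r: "poly [:a0, a1, a2, 1:] r = 0" using root_exists[of "[:a0, a1, a2, 1:]"] by auto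
  obtain r2 r3 where q: "\<forall>z::complex. z^2 + (a2 + r) * z + (a1 + r * (a2 + r)) = (z - r2) * (z - r3)"
    using quad_factor by blast
  have "z^3 + a2 * z^2 + a1 * z + a0 = (z - r) * (z^2 + (a2 + r) * z + (a1 + r * (a2 + r)))" for z
  proof -
    have a0: "a0 = - (a1 * r + a2 * r^2 + r^3)" using r by (simp add: algebra_simps power2_eq_square power3_eq_cube add_eq_0_iff)
    show ?thesis unfolding a0 by algebra
  qed
  then show ?thesis using q by (metis mult.assoc)
qed

lemma quartic_factor: "\<exists>r1 r2 r3 r4. \<forall>z::complex. z^4 + a3 * z^3 + a2 * z^2 + a1 * z + a0 = (z - r1) * (z - r2) * (z - r3) * (z - r4)"
proof -
  obtain r where r: "poly [:a0, a1, a2, a3, 1:] r = 0" using root_exists[of "[:a0, a1, a2, a3, 1:]"] by auto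
  obtain r2 r3 r4 where q: "\<forall>z::complex. z^3 + (a3 + r) * z^2 + (a2 + r * (a3 + r)) * z + (a1 + r * (a2 + r * (a3 + r))) = (z - r2) * (z - r3) * (z - r4)"
    using cubic_factor by blast
  have "z^4 + a3 * z^3 + a2 * z^2 + a1 * z + a0 = (z - r) * (z^3 + (a3 + r) * z^2 + (a2 + r * (a3 + r)) * z + (a1 + r * (a2 + r * (a3 + r))))" for z
  proof -
    have a0: "a0 = - (a1 * r + a2 * r^2 + a3 * r^3 + r^4)" using r by (simp add: algebra_simps power2_eq_square power3_eq_cube power4_eq_xxxx add_eq_0_iff)
    show ?thesis unfolding a0 by algebra
  qed
  then show ?thesis using q by (metis mult.assoc)
qed

lemma binary_quartic_factor:
  fixes c0 c1 c2 c3 c4 :: complex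
  assumes "c4 \<noteq> 0"
  shows "\<exists>r1 r2 r3 r4. \<forall>u v. c4 * u^4 + c3 * u^3 * v + c2 * u^2 * v^2 + c1 * u * v^3 + c0 * v^4
           = c4 * (u - r1 * v) * (u - r2 * v) * (u - r3 * v) * (u - r4 * v)"
proof -
  obtain r1 r2 r3 r4 where r: "\<forall>z::complex. z^4 + (c3/c4) * z^3 + (c2/c4) * z^2 + (c1/c4) * z + (c0/c4) = (z - r1) * (z - r2) * (z - r3) * (z - r4)"
    using quartic_factor by blast
  have "c4 * u^4 + c3 * u^3 * v + c2 * u^2 * v^2 + c1 * u * v^3 + c0 * v^4
           = c4 * (u - r1 * v) * (u - r2 * v) * (u - r3 * v) * (u - r4 * v)" for u v
  proof (cases "v = 0")
    case True then show ?thesis by (simp add: power4_eq_xxxx)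
  next
    case False
    have "c4 * u^4 + c3 * u^3 * v + c2 * u^2 * v^2 + c1 * u * v^3 + c0 * v^4
        = c4 * v^4 * ((u/v)^4 + (c3/c4) * (u/v)^3 + (c2/c4) * (u/v)^2 + (c1/c4) * (u/v) + (c0/c4))"
      using False assms by (simp add: field_simps power2_eq_square power3_eq_cube power4_eq_xxxx)
    also have "\<dots> = c4 * v^4 * ((u/v - r1) * (u/v - r2) * (u/v - r3) * (u/v - r4))" using spec[OF r, of "u/v"] by (simp only:)
    also have "\<dots> = c4 * (u - r1 * v) * (u - r2 * v) * (u - r3 * v) * (u - r4 * v)"
      using False by (simp add: field_simps power2_eq_square power3_eq_cube power4_eq_xxxx)
    finally show ?thesis .
  qed
  then show ?thesis by blast
qed




lemma quad_derivs:
  fixes F :: form3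
  assumes F: "\<forall>X Y Z. F X Y Z = A*X^2 + B*Y^2 + C*Z^2 + D*X*Y + E*X*Z + Fc*Y*Z"
  shows "deriv (\<lambda>x. F x y z) x0 = 2*A*x0 + D*y + E*z"
    and "deriv (\<lambda>y. F x y z) y0 = 2*B*y0 + D*x + Fc*z"
    and "deriv (\<lambda>z. F x y z) z0 = 2*C*z0 + E*x + Fc*y"
proof -
  have "(\<lambda>x. F x y z) = (\<lambda>x. A*x^2 + B*y^2 + C*z^2 + D*x*y + E*x*z + Fc*y*z)" using F by auto
  moreover have "((\<lambda>x. A*x^2 + B*y^2 + C*z^2 + D*x*y + E*x*z + Fc*y*z) has_field_derivative (2*A*x0 + D*y + E*z)) (at x0)"
    by (auto intro!: derivative_eq_intros simp: algebra_simps)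
  ultimately show "deriv (\<lambda>x. F x y z) x0 = 2*A*x0 + D*y + E*z" by (simp add: DERIV_imp_deriv)
  have "(\<lambda>y. F x y z) = (\<lambda>y. A*x^2 + B*y^2 + C*z^2 + D*x*y + E*x*z + Fc*y*z)" using F by auto
  moreover have "((\<lambda>y. A*x^2 + B*y^2 + C*z^2 + D*x*y + E*x*z + Fc*y*z) has_field_derivative (2*B*y0 + D*x + Fc*z)) (at y0)"
    by (auto intro!: derivative_eq_intros simp: algebra_simps)
  ultimately show "deriv (\<lambda>y. F x y z) y0 = 2*B*y0 + D*x + Fc*z" by (simp add: DERIV_imp_deriv)
  have "(\<lambda>z. F x y z) = (\<lambda>z. A*x^2 + B*y^2 + C*z^2 + D*x*y + E*x*z + Fc*y*z)" using F by auto
  moreover have "((\<lambda>z. A*x^2 + B*y^2 + C*z^2 + D*x*y + E*x*z + Fc*y*z) has_field_derivative (2*C*z0 + E*x + Fc*y)) (at z0)"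
    by (auto intro!: derivative_eq_intros simp: algebra_simps)
  ultimately show "deriv (\<lambda>z. F x y z) z0 = 2*C*z0 + E*x + Fc*y" by (simp add: DERIV_imp_deriv)
qed




lemma rep_help:
  fixes A B C D E Fc k1 k2 p1 p2 X Y Z :: complex
  assumes "k1*p2^2 = A" "k1*p1^2 = B" "-2*k1*p1*p2 = D" "k2*p2 = E" "-k2*p1 = Fc"
  shows "A*X^2 + B*Y^2 + C*Z^2 + D*X*Y + E*X*Z + Fc*Y*Z = k1*(p2*X-p1*Y)^2 + k2*(p2*X-p1*Y)*Z + C*Z^2"
  unfolding assms[symmetric] by algebra

lemma sing_rep0:
  fixes F :: form3
  assumes F: "\<forall>X Y Z. F X Y Z = A*X^2 + B*Y^2 + C*Z^2 + D*X*Y + E*X*Z + Fc*Y*Z"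
    and gx: "2*A*p1 + D*p2 = 0" and gy: "2*B*p2 + D*p1 = 0" and gz: "E*p1 + Fc*p2 = 0"
    and P: "(p1, p2) \<noteq> (0, 0)"
  shows "\<exists>k1 k2 k3. \<forall>X Y Z. F X Y Z = k1 * (p2*X - p1*Y)^2 + k2 * (p2*X - p1*Y) * Z + k3 * Z^2"
proof (cases "p1 = 0")
  case True
  then have p2: "p2 \<noteq> 0" using P by auto
  have D: "D = 0" using gx True p2 by simp
  have B: "B = 0" using gy True p2 D by simp
  have Fc: "Fc = 0" using gz True p2 by simp
  have "(A/p2^2)*p2^2 = A" "(A/p2^2)*p1^2 = B" "-2*(A/p2^2)*p1*p2 = D" "(E/p2)*p2 = E" "-(E/p2)*p1 = Fc"
    using p2 True B D Fc by simp_all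
  note h = rep_help[OF this, where C=C]
  have "\<forall>X Y Z. F X Y Z = (A/p2^2) * (p2*X - p1*Y)^2 + (E/p2) * (p2*X - p1*Y) * Z + C * Z^2"
    by (intro allI) (subst F[rule_format], rule h)
  then show ?thesis by blast
next
  case False
  have "D*p1 = -2*B*p2" using gy by (metis add_eq_0_iff2 mult.assoc mult_minus_left add.commute eq_neg_iff_add_eq_0)
  then have D: "D = -2*B*p2/p1" using False by (simp add: field_simps)
  have "2*A*p1 = - D*p2" using gx by (metis eq_neg_iff_add_eq_0 mult_minus_left)
  then have "2*A*p1*p1 = 2*(B*p2^2)" unfolding D using False by (simp add: field_simps power2_eq_square)
  then have "A*p1^2 = B*p2^2" by (simp add: power2_eq_square mult.assoc)
  then have A: "(B/p1^2)*p2^2 = A" using False by (simp add: field_simps)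
  have "E*p1 = - Fc*p2" using gz by (metis eq_neg_iff_add_eq_0 mult_minus_left)
  then have E: "(-Fc/p1)*p2 = E" using False by (simp add: field_simps)
  have "(B/p1^2)*p1^2 = B" "-2*(B/p1^2)*p1*p2 = D" "-(-Fc/p1)*p1 = Fc"
    using False D by (simp_all add: field_simps power2_eq_square)
  note h = rep_help[OF A this(1,2) E this(3), where C=C]
  have "\<forall>X Y Z. F X Y Z = (B/p1^2) * (p2*X - p1*Y)^2 + (-Fc/p1) * (p2*X - p1*Y) * Z + C * Z^2"
    by (intro allI) (subst F[rule_format], rule h)
  then show ?thesis by blast
qed



lemma sing_rep1:
  fixes F :: form3
  assumes F: "\<forall>X Y Z. F X Y Z = A*X^2 + B*Y^2 + C*Z^2 + D*X*Y + E*X*Z + Fc*Y*Z"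
    and gx: "2*A*p1 + D*p2 + E*p3 = 0" and gy: "2*B*p2 + D*p1 + Fc*p3 = 0" and gz: "2*C*p3 + E*p1 + Fc*p2 = 0"
    and p3: "p3 \<noteq> 0"
  shows "\<forall>X Y Z. F X Y Z = A * (X - p1/p3*Z)^2 + D * (X - p1/p3*Z) * (Y - p2/p3*Z) + B * (Y - p2/p3*Z)^2"
proof -
  define a0 where "a0 = p1/p3"
  define b0 where "b0 = p2/p3"
  have p1: "p1 = a0 * p3" and p2: "p2 = b0 * p3" using p3 by (simp_all add: a0_def b0_def)
  have "p3 * (E + (2*A*a0 + D*b0)) = 0" using gx unfolding p1 p2 by (simp add: algebra_simps)
  then have "E = - (2*A*a0 + D*b0)" using p3 by (metis eq_neg_iff_add_eq_0 mult_eq_0_iff)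
  then have E: "E = - 2*A*a0 - D*b0" by simp
  have "p3 * (Fc + (2*B*b0 + D*a0)) = 0" using gy unfolding p1 p2 by (simp add: algebra_simps)
  then have "Fc = - (2*B*b0 + D*a0)" using p3 by (metis eq_neg_iff_add_eq_0 mult_eq_0_iff)
  then have Fc: "Fc = - 2*B*b0 - D*a0" by simp
  have "p3 * (2*C + E*a0 + Fc*b0) = 0" using gz unfolding p1 p2 by (simp add: algebra_simps)
  then have "2*C + E*a0 + Fc*b0 = 0" using p3 by simp
  then have "2*C = - (E*a0 + Fc*b0)" by (metis eq_neg_iff_add_eq_0 add.assoc)
  then have "2*C = 2*(A*a0^2 + D*a0*b0 + B*b0^2)" unfolding E Fc by (simp add: algebra_simps power2_eq_square)
  then have C: "C = A*a0^2 + D*a0*b0 + B*b0^2" by (metis mult_cancel_left zero_neq_numeral)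
  show ?thesis unfolding a0_def[symmetric] b0_def[symmetric]
    by (simp add: F C E Fc power2_eq_square algebra_simps)
qed




lemma factor_Q:
  fixes A B D \<alpha> \<beta> :: complex
  assumes ab: "(\<alpha>, \<beta>) \<noteq> (0, 0)" and Q: "A*\<beta>^2 - D*\<alpha>*\<beta> + B*\<alpha>^2 = 0"
  shows "\<exists>\<sigma> \<tau>. \<forall>\<xi> \<eta>. A*\<xi>^2 + D*\<xi>*\<eta> + B*\<eta>^2 = (\<alpha>*\<xi> + \<beta>*\<eta>) * (\<sigma>*\<xi> + \<tau>*\<eta>)"
proof (cases "\<alpha> = 0")
  case True
  then have b: "\<beta> \<noteq> 0" using ab by auto
  have A: "A = 0" using Q True b by simp
  show ?thesis
    apply (rule exI[of _ "D/\<beta>"], rule exI[of _ "B/\<beta>"])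
    using A True b by (simp add: field_simps power2_eq_square)
next
  case False
  have B: "B = (D*\<alpha>*\<beta> - A*\<beta>^2) / \<alpha>^2" using Q False by (simp add: field_simps)
  show ?thesis
    apply (rule exI[of _ "A/\<alpha>"], rule exI[of _ "(D - \<beta>*A/\<alpha>)/\<alpha>"])
    using False by (simp add: B field_simps power2_eq_square)
qed

lemma complete_sq:
  fixes A B D \<alpha> \<beta> :: complex
  assumes ab: "(\<alpha>, \<beta>) \<noteq> (0, 0)" and Q: "A*\<beta>^2 - D*\<alpha>*\<beta> + B*\<alpha>^2 \<noteq> 0"
  shows "\<exists>\<sigma> \<tau> d. (\<forall>\<xi> \<eta>. A*\<xi>^2 + D*\<xi>*\<eta> + B*\<eta>^2 = (\<sigma>*\<xi> + \<tau>*\<eta>)^2 + d*(\<alpha>*\<xi> + \<beta>*\<eta>)^2) \<and> \<alpha>*\<tau> - \<beta>*\<sigma> \<noteq> 0"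
proof (cases "\<alpha> = 0")
  case True
  then have b: "\<beta> \<noteq> 0" using ab by auto
  have A: "A \<noteq> 0" using Q True by simp
  define sq where "sq = csqrt A"
  have s2: "sq^2 = A" by (simp add: sq_def)
  have sq: "sq \<noteq> 0" using A s2 by auto
  have "A*\<xi>^2 + D*\<xi>*\<eta> + B*\<eta>^2 = (sq*\<xi> + (sq*D/(2*A))*\<eta>)^2 + ((B - D^2/(4*A))/\<beta>^2)*(\<alpha>*\<xi> + \<beta>*\<eta>)^2" for \<xi> \<eta>
  proof -
    have "(sq*\<xi> + (sq*D/(2*A))*\<eta>)^2 = sq^2 * (\<xi> + D/(2*A)*\<eta>)^2" by (simp add: power2_eq_square algebra_simps)
    then show ?thesis unfolding s2 using A b True by (simp add: field_simps power2_eq_square)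
  qed
  moreover have "\<alpha>*(sq*D/(2*A)) - \<beta>* sq \<noteq> 0" using True b sq by simp
  ultimately show ?thesis by blast
next
  case False
  define Cq where "Cq = (A*\<beta>^2 - D*\<alpha>*\<beta> + B*\<alpha>^2) / \<alpha>^2"
  have Cq: "Cq \<noteq> 0" using Q False by (simp add: Cq_def)
  define sq where "sq = csqrt Cq"
  have s2: "sq^2 = Cq" by (simp add: sq_def)
  have sq: "sq \<noteq> 0" using Cq s2 by auto
  define Bq where "Bq = -2*A*\<beta>/\<alpha>^2 + D/\<alpha>"
  define Aq where "Aq = A/\<alpha>^2"
  have "A*\<xi>^2 + D*\<xi>*\<eta> + B*\<eta>^2 = (sq*Bq*\<alpha>/(2*Cq)*\<xi> + sq*(1 + Bq*\<beta>/(2*Cq))*\<eta>)^2 + (Aq - Bq^2/(4*Cq))*(\<alpha>*\<xi> + \<beta>*\<eta>)^2" for \<xi> \<eta>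
  proof -
    define u where "u = \<alpha>*\<xi> + \<beta>*\<eta>"
    have "sq*Bq*\<alpha>/(2*Cq)*\<xi> + sq*(1 + Bq*\<beta>/(2*Cq))*\<eta> = sq * (\<eta> + Bq*u/(2*Cq))"
      using Cq by (simp add: u_def field_simps)
    then have "(sq*Bq*\<alpha>/(2*Cq)*\<xi> + sq*(1 + Bq*\<beta>/(2*Cq))*\<eta>)^2 = Cq * (\<eta> + Bq*u/(2*Cq))^2"
      by (simp add: power_mult_distrib s2)
    also have "\<dots> = Cq*\<eta>^2 + Bq*u*\<eta> + Bq^2*u^2/(4*Cq)" using Cq by (simp add: field_simps power2_eq_square)
    finally have 1: "(sq*Bq*\<alpha>/(2*Cq)*\<xi> + sq*(1 + Bq*\<beta>/(2*Cq))*\<eta>)^2 + (Aq - Bq^2/(4*Cq))*u^2 = Cq*\<eta>^2 + Bq*u*\<eta> + Aq*u^2"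
      by (simp add: algebra_simps)
    have 2: "Cq*\<eta>^2 + Bq*u*\<eta> + Aq*u^2 = A*\<xi>^2 + D*\<xi>*\<eta> + B*\<eta>^2"
      unfolding Cq_def Bq_def Aq_def u_def using False by (simp add: field_simps power2_eq_square)
    show ?thesis using 1 2 by (simp add: u_def)
  qed
  moreover have "\<alpha>*(sq*(1 + Bq*\<beta>/(2*Cq))) - \<beta>*(sq*Bq*\<alpha>/(2*Cq)) \<noteq> 0"
  proof -
    have "\<alpha>*(sq*(1 + Bq*\<beta>/(2*Cq))) - \<beta>*(sq*Bq*\<alpha>/(2*Cq)) = \<alpha>* sq" using Cq by (simp add: field_simps)
    then show ?thesis using False sq by simp
  qed
  ultimately show ?thesis by blast
qed




theorem lemma2:
  fixes F1 F2 :: form3 and p1 p2 p3 :: complex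
  assumes F1: "linear_form F1"
    and F2: "quadratic_form F2"
    and L_ne_Linf: "\<not> (\<exists>c. \<forall>X Y Z. F1 X Y Z = c * Z)"
    and no_L: "\<not> line_component F1 F2"
    and no_Linf: "\<not> line_component (\<lambda>X Y Z. Z) F2"
    and P: "(p1, p2, p3) \<noteq> (0, 0, 0)"
    and sing: "singular_at F2 p1 p2 p3"
  defines "G \<equiv> (\<lambda>X Y Z. (F2 X Y Z)^2 + (F1 X Y Z)^3 * Z)"
  shows
    "(F1 p1 p2 p3 = 0 \<and> p3 \<noteq> 0 \<longrightarrow> proj_e6 G p1 p2 p3)
   \<and> (p3 = 0 \<and> F1 p1 p2 p3 \<noteq> 0 \<longrightarrow>
        smooth_at G p1 p2 p3 \<and> tangent_to_Linf G p1 p2 p3 \<and>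
        (\<forall>q1 q2. (\<forall>c. (q1, q2, 0) \<noteq> (c * p1, c * p2, c * p3)) \<longrightarrow>
           line_int_mult G (p1, p2, p3) (q1, q2, 0) = 4))
   \<and> (F1 p1 p2 p3 = 0 \<and> p3 = 0 \<longrightarrow>
        (\<exists>l1 l2 l3 l4. linear_form l1 \<and> linear_form l2 \<and> linear_form l3 \<and> linear_form l4 \<and>
           l1 p1 p2 p3 = 0 \<and> l2 p1 p2 p3 = 0 \<and> l3 p1 p2 p3 = 0 \<and> l4 p1 p2 p3 = 0 \<and>
           (\<forall>X Y Z. G X Y Z = l1 X Y Z * l2 X Y Z * l3 X Y Z * l4 X Y Z)))"
proof -
  obtain \<alpha> \<beta> \<gamma> where F1e: "\<forall>X Y Z. F1 X Y Z = \<alpha>*X + \<beta>*Y + \<gamma>*Z"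
    using F1 unfolding linear_form_def by blast
  have ab: "(\<alpha>, \<beta>) \<noteq> (0, 0)"
  proof
    assume "(\<alpha>, \<beta>) = (0, 0)"
    then have "\<forall>X Y Z. F1 X Y Z = \<gamma> * Z" using F1e by simp
    then show False using L_ne_Linf by blast
  qed
  obtain A B C D E Fc where F2e: "\<forall>X Y Z. F2 X Y Z = A*X^2 + B*Y^2 + C*Z^2 + D*X*Y + E*X*Z + Fc*Y*Z"
    and F2nz: "F2 \<noteq> (\<lambda>_ _ _. 0)"
    using F2 unfolding quadratic_form_def by blast
  have F2P: "F2 p1 p2 p3 = 0" using sing by (simp add: singular_at_def)
  have gx: "2*A*p1 + D*p2 + E*p3 = 0" and gy: "2*B*p2 + D*p1 + Fc*p3 = 0" and gz: "2*C*p3 + E*p1 + Fc*p2 = 0"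
    using sing quad_derivs[OF F2e] by (auto simp: singular_at_def zero_grad_def)
  have Ge: "G X Y Z = (F2 X Y Z)^2 + (F1 X Y Z)^3 * Z" for X Y Z by (simp add: G_def)
  have part1: "F1 p1 p2 p3 = 0 \<and> p3 \<noteq> 0 \<longrightarrow> proj_e6 G p1 p2 p3"
  proof (intro impI, elim conjE)
    assume F1P: "F1 p1 p2 p3 = 0" and p3: "p3 \<noteq> 0"
    define a0 where "a0 = p1/p3"
    define b0 where "b0 = p2/p3"
    have rep: "\<forall>X Y Z. F2 X Y Z = A * (X - a0*Z)^2 + D * (X - a0*Z) * (Y - b0*Z) + B * (Y - b0*Z)^2"
      unfolding a0_def b0_def by (rule sing_rep1[OF F2e gx gy gz p3])
    have "\<alpha>*p1 + \<beta>*p2 + \<gamma>*p3 = 0" using F1P F1e by simp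
    then have "p3 * (\<gamma> + (\<alpha>*a0 + \<beta>*b0)) = 0" using p3 by (simp add: a0_def b0_def field_simps)
    then have gam: "\<gamma> = - (\<alpha>*a0 + \<beta>*b0)" using p3 by (metis eq_neg_iff_add_eq_0 mult_eq_0_iff)
    have F1r: "\<forall>X Y Z. F1 X Y Z = \<alpha> * (X - a0*Z) + \<beta> * (Y - b0*Z)"
      using F1e unfolding gam by (simp add: algebra_simps)
    have Q: "A*\<beta>^2 - D*\<alpha>*\<beta> + B*\<alpha>^2 \<noteq> 0"
    proof
      assume "A*\<beta>^2 - D*\<alpha>*\<beta> + B*\<alpha>^2 = 0"
      from factor_Q[OF ab this] obtain \<sigma> \<tau> where
        fq: "\<forall>\<xi> \<eta>. A*\<xi>^2 + D*\<xi>*\<eta> + B*\<eta>^2 = (\<alpha>*\<xi> + \<beta>*\<eta>) * (\<sigma>*\<xi> + \<tau>*\<eta>)" by blast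
      have F2f: "F2 X Y Z = F1 X Y Z * (\<sigma>*X + \<tau>*Y + (- \<sigma>*a0 - \<tau>*b0)*Z)" for X Y Z
      proof -
        have "F2 X Y Z = (\<alpha>*(X - a0*Z) + \<beta>*(Y - b0*Z)) * (\<sigma>*(X - a0*Z) + \<tau>*(Y - b0*Z))"
          using rep[rule_format, of X Y Z] fq[rule_format, of "X - a0*Z" "Y - b0*Z"] by simp
        also have "\<dots> = F1 X Y Z * (\<sigma>*X + \<tau>*Y + (- \<sigma>*a0 - \<tau>*b0)*Z)"
          unfolding F1r[rule_format] by (simp add: algebra_simps)
        finally show ?thesis .
      qed
      have "(\<sigma>, \<tau>, - \<sigma>*a0 - \<tau>*b0) \<noteq> (0, 0, 0)"
      proof
        assume "(\<sigma>, \<tau>, - \<sigma>*a0 - \<tau>*b0) = (0, 0, 0)"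
        then have "\<sigma> = 0" "\<tau> = 0" by simp_all
        then have "F2 = (\<lambda>_ _ _. 0)" using F2f by (simp add: fun_eq_iff)
        then show False using F2nz by simp
      qed
      then have "linear_form (\<lambda>X Y Z. \<sigma>*X + \<tau>*Y + (- \<sigma>*a0 - \<tau>*b0)*Z)"
        unfolding linear_form_def by blast
      then have "line_component F1 F2" unfolding line_component_def
        using F2f by (intro exI[of _ "\<lambda>X Y Z. \<sigma>*X + \<tau>*Y + (- \<sigma>*a0 - \<tau>*b0)*Z"]) simp
      then show False using no_L by simp
    qed
    obtain \<sigma> \<tau> d where cs: "\<forall>\<xi> \<eta>. A*\<xi>^2 + D*\<xi>*\<eta> + B*\<eta>^2 = (\<sigma>*\<xi> + \<tau>*\<eta>)^2 + d*(\<alpha>*\<xi> + \<beta>*\<eta>)^2"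
      and det: "\<alpha>*\<tau> - \<beta>*\<sigma> \<noteq> 0"
      using complete_sq[OF ab Q] by blast
    define T where "T = (\<lambda>z::complex\<times>complex. (\<alpha>*(fst z - a0) + \<beta>*(snd z - b0), \<sigma>*(fst z - a0) + \<tau>*(snd z - b0)))"
    have cT: "continuous_on UNIV T" unfolding T_def by (intro continuous_intros)
    have iT: "inj T"
    proof (rule injI)
      fix z w assume "T z = T w"
      then have e1: "\<alpha>*(fst z - fst w) + \<beta>*(snd z - snd w) = 0" and e2: "\<sigma>*(fst z - fst w) + \<tau>*(snd z - snd w) = 0"
        by (auto simp: T_def algebra_simps)
      have "(\<alpha>*\<tau> - \<beta>*\<sigma>) * (fst z - fst w) = \<tau> * (\<alpha>*(fst z - fst w) + \<beta>*(snd z - snd w)) - \<beta> * (\<sigma>*(fst z - fst w) + \<tau>*(snd z - snd w))"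
        by (simp add: algebra_simps)
      then have 1: "fst z = fst w" using e1 e2 det by simp
      have "(\<alpha>*\<tau> - \<beta>*\<sigma>) * (snd z - snd w) = \<alpha> * (\<sigma>*(fst z - fst w) + \<tau>*(snd z - snd w)) - \<sigma> * (\<alpha>*(fst z - fst w) + \<beta>*(snd z - snd w))"
        by (simp add: algebra_simps)
      then have 2: "snd z = snd w" using e1 e2 det by simp
      show "z = w" using 1 2 by (simp add: prod_eq_iff)
    qed
    have Tp: "T (a0, b0) = 0" by (simp add: T_def zero_prod_def)
    have gid: "(\<lambda>(x, y). G x y 1) z = fst (T z)^3 + (snd (T z)^2 + d * fst (T z)^2)^2" for z
    proof -
      obtain x y where z: "z = (x, y)" by (cases z)
      have "F2 x y 1 = (\<sigma>*(x - a0) + \<tau>*(y - b0))^2 + d*(\<alpha>*(x - a0) + \<beta>*(y - b0))^2"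
        using rep[rule_format, of x y 1] cs[rule_format, of "x - a0" "y - b0"] by simp
      moreover have "F1 x y 1 = \<alpha>*(x - a0) + \<beta>*(y - b0)" using F1r by simp
      ultimately show ?thesis by (simp add: z Ge T_def add.commute)
    qed
    show "proj_e6 G p1 p2 p3" unfolding proj_e6_def a0_def[symmetric] b0_def[symmetric]
      by (rule e6_core[OF cT iT Tp gid])
  qed
  have part23: "p3 = 0 \<longrightarrow> (F1 p1 p2 p3 \<noteq> 0 \<longrightarrow>
        smooth_at G p1 p2 p3 \<and> tangent_to_Linf G p1 p2 p3 \<and>
        (\<forall>q1 q2. (\<forall>c. (q1, q2, 0) \<noteq> (c * p1, c * p2, c * p3)) \<longrightarrow>
           line_int_mult G (p1, p2, p3) (q1, q2, 0) = 4))
   \<and> (F1 p1 p2 p3 = 0 \<longrightarrow>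
        (\<exists>l1 l2 l3 l4. linear_form l1 \<and> linear_form l2 \<and> linear_form l3 \<and> linear_form l4 \<and>
           l1 p1 p2 p3 = 0 \<and> l2 p1 p2 p3 = 0 \<and> l3 p1 p2 p3 = 0 \<and> l4 p1 p2 p3 = 0 \<and>
           (\<forall>X Y Z. G X Y Z = l1 X Y Z * l2 X Y Z * l3 X Y Z * l4 X Y Z)))"
  proof
    assume p3: "p3 = 0"
    have p12: "(p1, p2) \<noteq> (0, 0)" using P p3 by auto
    have gx': "2*A*p1 + D*p2 = 0" and gy': "2*B*p2 + D*p1 = 0" and gz': "E*p1 + Fc*p2 = 0"
      using gx gy gz p3 by simp_all
    obtain k1 k2 k3 where rep0: "\<forall>X Y Z. F2 X Y Z = k1 * (p2*X - p1*Y)^2 + k2 * (p2*X - p1*Y) * Z + k3 * Z^2"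
      using sing_rep0[OF F2e gx' gy' gz' p12] by blast
    have k1: "k1 \<noteq> 0"
    proof
      assume k10: "k1 = 0"
      have F2z: "F2 X Y Z = Z * ((k2*p2)*X + (-k2*p1)*Y + k3*Z)" for X Y Z
        using rep0 k10 by (simp add: algebra_simps power2_eq_square)
      show False
      proof (cases "(k2*p2, -k2*p1, k3) = (0, 0, 0)")
        case True
        then have "k2 = 0" "k3 = 0" using p12 by auto
        then have "F2 = (\<lambda>_ _ _. 0)" using F2z by (simp add: fun_eq_iff)
        then show False using F2nz by simp
      next
        case False
        then have "linear_form (\<lambda>X Y Z. (k2*p2)*X + (-k2*p1)*Y + k3*Z)"
          unfolding linear_form_def by blast
        then have "line_component (\<lambda>X Y Z. Z) F2" unfolding line_component_def
          using F2z by (intro exI[of _ "\<lambda>X Y Z. (k2*p2)*X + (-k2*p1)*Y + k3*Z"]) simp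
        then show False using no_Linf by simp
      qed
    qed
    have Ge2: "G = (\<lambda>X Y Z. (k1 * (p2*X - p1*Y)^2 + k2 * (p2*X - p1*Y) * Z + k3 * Z^2)^2 + (\<alpha>*X + \<beta>*Y + \<gamma>*Z)^3 * Z)"
      using rep0 F1e by (simp add: G_def fun_eq_iff)
    show "(F1 p1 p2 p3 \<noteq> 0 \<longrightarrow>
        smooth_at G p1 p2 p3 \<and> tangent_to_Linf G p1 p2 p3 \<and>
        (\<forall>q1 q2. (\<forall>c. (q1, q2, 0) \<noteq> (c * p1, c * p2, c * p3)) \<longrightarrow>
           line_int_mult G (p1, p2, p3) (q1, q2, 0) = 4))
      \<and> (F1 p1 p2 p3 = 0 \<longrightarrow>
        (\<exists>l1 l2 l3 l4. linear_form l1 \<and> linear_form l2 \<and> linear_form l3 \<and> linear_form l4 \<and>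
           l1 p1 p2 p3 = 0 \<and> l2 p1 p2 p3 = 0 \<and> l3 p1 p2 p3 = 0 \<and> l4 p1 p2 p3 = 0 \<and>
           (\<forall>X Y Z. G X Y Z = l1 X Y Z * l2 X Y Z * l3 X Y Z * l4 X Y Z)))"
    proof (intro conjI impI)
      assume F1P: "F1 p1 p2 p3 \<noteq> 0"
      have F1P': "\<alpha>*p1 + \<beta>*p2 \<noteq> 0" using F1P F1e p3 by simp
      have dx: "((\<lambda>x. G x p2 p3) has_field_derivative 0) (at p1)"
        unfolding Ge2 p3 by (auto intro!: derivative_eq_intros)
      have dy: "((\<lambda>y. G p1 y p3) has_field_derivative 0) (at p2)"
        unfolding Ge2 p3 by (auto intro!: derivative_eq_intros)
      have dz: "((\<lambda>z. G p1 p2 z) has_field_derivative (\<alpha>*p1 + \<beta>*p2)^3) (at p3)"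
        unfolding Ge2 p3 by (auto intro!: derivative_eq_intros)
      have GP: "G p1 p2 p3 = 0" using F2P p3 by (simp add: G_def)
      have tg: "tangent_to_Linf G p1 p2 p3" unfolding tangent_to_Linf_def
        using DERIV_imp_deriv[OF dx] DERIV_imp_deriv[OF dy] DERIV_imp_deriv[OF dz] F1P' by simp
      then show "smooth_at G p1 p2 p3" using GP by (simp add: smooth_at_def zero_grad_def tangent_to_Linf_def)
      show "tangent_to_Linf G p1 p2 p3" by (rule tg)
      show "\<forall>q1 q2. (\<forall>c. (q1, q2, 0) \<noteq> (c * p1, c * p2, c * p3)) \<longrightarrow>
           line_int_mult G (p1, p2, p3) (q1, q2, 0) = 4"
      proof (intro allI impI)
        fix q1 q2 assume nq: "\<forall>c. (q1, q2, 0) \<noteq> (c * p1, c * p2, c * p3)"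
        define \<delta> where "\<delta> = p2*q1 - p1*q2"
        have \<delta>: "\<delta> \<noteq> 0"
        proof
          assume "\<delta> = 0"
          then have e: "p2*q1 = p1*q2" by (simp add: \<delta>_def)
          show False
          proof (cases "p1 = 0")
            case True
            then have "p2 \<noteq> 0" using p12 by auto
            then have "q1 = 0" using e True by simp
            then have "(q1, q2, 0) = ((q2/p2) * p1, (q2/p2) * p2, (q2/p2) * p3)" using True p3 \<open>p2 \<noteq> 0\<close> by simp
            then show False using nq by blast
          next
            case False
            have "q2 = (q1/p1) * p2" using e False by (simp add: field_simps)
            then have "(q1, q2, 0) = ((q1/p1) * p1, (q1/p1) * p2, (q1/p1) * p3)" using False p3 by simp
            then show False using nq by blast
          qed
        qed
        have fe: "G (p1 + t*q1) (p2 + t*q2) (p3 + t*0) = (k1^2 * \<delta>^4) * (t - 0) powi 4" for t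
        proof -
          have "p2*(p1 + t*q1) - p1*(p2 + t*q2) = t * \<delta>" by (simp add: \<delta>_def algebra_simps)
          then show ?thesis unfolding Ge2 p3 by (simp add: power_mult_distrib power2_eq_square power4_eq_xxxx)
        qed
        have "zorder (\<lambda>t. G (p1 + t*q1) (p2 + t*q2) (p3 + t*0)) 0 = 4"
          by (rule zorder_eqI[of UNIV 0 "\<lambda>_. k1^2 * \<delta>^4"]) (use k1 \<delta> fe in auto)
        then show "line_int_mult G (p1, p2, p3) (q1, q2, 0) = 4" by (simp add: line_int_mult_def)
      qed
    next
      assume F1P: "F1 p1 p2 p3 = 0"
      have e: "\<alpha>*p1 + \<beta>*p2 = 0" using F1P F1e p3 by simp
      obtain \<mu> where mu: "\<alpha> = \<mu>*p2" "\<beta> = - \<mu>*p1"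
      proof (cases "p1 = 0")
        case True
        then have "p2 \<noteq> 0" using p12 by auto
        then show ?thesis using that[of "\<alpha>/p2"] e True by simp
      next
        case False
        show ?thesis using that[of "-\<beta>/p1"] e False by (simp add: field_simps) (metis add_eq_0_iff2 mult.commute neg_eq_iff_add_eq_0)
      qed
      obtain r1 r2 r3 r4 where r: "\<forall>u v. k1^2 * u^4 + (2*k1*k2 + \<mu>^3) * u^3 * v + (k2^2 + 2*k1*k3 + 3*\<mu>^2*\<gamma>) * u^2 * v^2
            + (2*k2*k3 + 3*\<mu>*\<gamma>^2) * u * v^3 + (k3^2 + \<gamma>^3) * v^4
           = k1^2 * (u - r1 * v) * (u - r2 * v) * (u - r3 * v) * (u - r4 * v)"
        using binary_quartic_factor[of "k1^2" "2*k1*k2 + \<mu>^3" "k2^2 + 2*k1*k3 + 3*\<mu>^2*\<gamma>" "2*k2*k3 + 3*\<mu>*\<gamma>^2" "k3^2 + \<gamma>^3"] k1 by auto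
      have Gq: "G X Y Z = k1^2 * ((p2*X - p1*Y) - r1 * Z) * ((p2*X - p1*Y) - r2 * Z) * ((p2*X - p1*Y) - r3 * Z) * ((p2*X - p1*Y) - r4 * Z)" for X Y Z
      proof -
        define u where "u = p2*X - p1*Y"
        have "\<alpha>*X + \<beta>*Y + \<gamma>*Z = \<mu>*u + \<gamma>*Z" by (simp add: mu u_def algebra_simps)
        then have "G X Y Z = (k1 * u^2 + k2 * u * Z + k3 * Z^2)^2 + (\<mu>*u + \<gamma>*Z)^3 * Z"
          unfolding Ge2 u_def by simp
        also have "\<dots> = k1^2 * u^4 + (2*k1*k2 + \<mu>^3) * u^3 * Z + (k2^2 + 2*k1*k3 + 3*\<mu>^2*\<gamma>) * u^2 * Z^2
            + (2*k2*k3 + 3*\<mu>*\<gamma>^2) * u * Z^3 + (k3^2 + \<gamma>^3) * Z^4"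
          by algebra
        also have "\<dots> = k1^2 * (u - r1 * Z) * (u - r2 * Z) * (u - r3 * Z) * (u - r4 * Z)"
          using r by blast
        finally show ?thesis by (simp add: u_def)
      qed
      have lin: "linear_form (\<lambda>X Y Z. c * (p2*X - p1*Y - r * Z))" if "c \<noteq> 0" for c r
      proof -
        have "(c*p2, -c*p1, -c*r) \<noteq> (0, 0, 0)" using that p12 by auto
        then show ?thesis unfolding linear_form_def
          by (intro exI[of _ "c*p2"] exI[of _ "-c*p1"] exI[of _ "-c*r"]) (auto simp: algebra_simps)
      qed
      show "\<exists>l1 l2 l3 l4. linear_form l1 \<and> linear_form l2 \<and> linear_form l3 \<and> linear_form l4 \<and>
           l1 p1 p2 p3 = 0 \<and> l2 p1 p2 p3 = 0 \<and> l3 p1 p2 p3 = 0 \<and> l4 p1 p2 p3 = 0 \<and>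
           (\<forall>X Y Z. G X Y Z = l1 X Y Z * l2 X Y Z * l3 X Y Z * l4 X Y Z)"
        apply (rule exI[of _ "\<lambda>X Y Z. k1^2 * (p2*X - p1*Y - r1 * Z)"])
        apply (rule exI[of _ "\<lambda>X Y Z. 1 * (p2*X - p1*Y - r2 * Z)"])
        apply (rule exI[of _ "\<lambda>X Y Z. 1 * (p2*X - p1*Y - r3 * Z)"])
        apply (rule exI[of _ "\<lambda>X Y Z. 1 * (p2*X - p1*Y - r4 * Z)"])
        using lin[of "k1^2" r1] lin[of 1 r2] lin[of 1 r3] lin[of 1 r4] k1 Gq p3 by (simp add: mult.assoc)
    qed
  qed
  show ?thesis using part1 part23 by blast
qed


end
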